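(* Fix an instance and a set $S$ of its jobs (e.g. the jobs of an optimum schedule). With respect to the random hierarchical decomposition (random offset $r_0$ chosen uniformly in $[0,T/q]$), the expected number of jobs of $S$ that are span-crossing is at most $\frac{\lambda+1}{q}|S|=O(\varepsilon|S|)$.
   Context: Jobs $j$ have integer release time $r_j$, deadline $d_j$ and processing time $p_j$ in $[0,T]$; $span_j=[r_j,d_j]$ and $|span_j|=d_j-r_j$. Fix $\varepsilon>0$ with $q=1/\varepsilon^2$ an integer, $\lambda=1/\varepsilon=\varepsilon q$, $k=\log_q T$ (assume $T$ is a power of $q$), and $\ell_i=T/q^{i+1}$ for $i\ge 0$. Random hierarchical decomposition: pick $r_0$ uniformly at random in $[0,T/q]$; for each $0\le i\le k$, the partition $I_i$ of $[0,T]$ consists of the intervals between consecutive points of $\{0,T\}\cup\big(\{r_0+s\ell_i: s\in\mathbb{Z}\}\cap(0,T)\big)$, so all intervals of $I_i$ have length $\ell_i$ except possibly the first and last, whose lengths sum to $\ell_i$; each interval of $I_i$ is a union of $q$ consecutive intervals of $I_{i+1}$ (first/last possibly fewer). Job classes: $j\in\mathcal{J}_0$ if $|span_j|\ge\lambda\ell_0$; $j\in\mathcal{J}_i$ ($1\le i\le k$) if $\lambda\ell_i\le|span_j|<\lambda\ell_{i-1}$; $j\in\mathcal{J}_{k+1}$ if $|span_j|<\lambda\ell_k$. A job $j$ is span-crossing if $j\in\mathcal{J}_i$ for some $2\le i\le k+1$ and $span_j$ intersects (in a set of positive length) more than one interval of $I_{i-2}$. *)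

theory Defs
  imports "HOL-Analysis.Analysis"
begin

definition ell :: "nat \<Rightarrow> nat \<Rightarrow> nat \<Rightarrow> real" where
  "ell q T i = real T / real q ^ (i + 1)"

definition grid_points :: "nat \<Rightarrow> nat \<Rightarrow> real \<Rightarrow> nat \<Rightarrow> real set" where
  "grid_points q T r0 i =
     {0, real T} \<union> ({x. \<exists>s::int. x = r0 + real_of_int s * ell q T i} \<inter> {0<..<real T})"

definition level_partition :: "nat \<Rightarrow> nat \<Rightarrow> real \<Rightarrow> nat \<Rightarrow> real set set" where
  "level_partition q T r0 i =
     {{a..b} | a b. a \<in> grid_points q T r0 i \<and> b \<in> grid_points q T r0 i \<and> a < b \<and>
                    {a<..<b} \<inter> grid_points q T r0 i = {}}"

text \<open>Job classes J_0,...,J_{k+1}, with lambda = 1/eps; L is the span length d_j - r_j.\<close>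
definition in_class :: "real \<Rightarrow> nat \<Rightarrow> nat \<Rightarrow> nat \<Rightarrow> nat \<Rightarrow> real \<Rightarrow> bool" where
  "in_class eps q T k i L =
     (if i = 0 then L \<ge> (1/eps) * ell q T 0
      else if i \<le> k then (1/eps) * ell q T i \<le> L \<and> L < (1/eps) * ell q T (i - 1)
      else if i = k + 1 then L < (1/eps) * ell q T k
      else False)"

definition span_crossing :: "real \<Rightarrow> nat \<Rightarrow> nat \<Rightarrow> nat \<Rightarrow> real \<Rightarrow> int \<Rightarrow> int \<Rightarrow> bool" where
  "span_crossing eps q T k r0 rj dj =
     (\<exists>i \<in> {2..k+1}. in_class eps q T k i (real_of_int (dj - rj)) \<and>
        (\<exists>I1 \<in> level_partition q T r0 (i - 2). \<exists>I2 \<in> level_partition q T r0 (i - 2).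
           I1 \<noteq> I2 \<and>
           measure lborel (I1 \<inter> {real_of_int rj..real_of_int dj}) > 0 \<and>
           measure lborel (I2 \<inter> {real_of_int rj..real_of_int dj}) > 0))"

end

theory Submission
  imports Defs
begin

definition Bset :: "real \<Rightarrow> real \<Rightarrow> real \<Rightarrow> real set" where
  "Bset a b l = {x. \<exists>s::int. a < x + s * l \<and> x + s * l < b}"

lemma Bset_open: "open (Bset a b l)"
proof -
  have "Bset a b l = (\<Union>s::int. {a - s*l <..< b - s*l})"
    unfolding Bset_def by (simp add: less_diff_eq diff_less_eq set_eq_iff)
  thus ?thesis by auto
qed

lemma Bset_sets: "Bset a b l \<in> sets lborel"
  using Bset_open by simp

lemma cell_sub:
  assumes l: "l > 0" and L: "b - a \<le> l"
  obtains c where "u \<le> c" "c < u + l"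
    "Bset a b l \<inter> {u..u+l} \<subseteq> {c..min (c + (b-a)) (u+l)} \<union> {u..c + (b-a) - l}"
proof -
  define s0 where "s0 = floor ((a - u)/l)"
  define c where "c = a - s0 * l"
  have f1: "s0 \<le> (a-u)/l" "(a-u)/l < s0 + 1" unfolding s0_def
    using floor_correct[of "(a-u)/l"] by simp_all
  have "s0 * l \<le> a - u" using f1(1) l by (simp add: le_divide_eq)
  hence c1: "u \<le> c" unfolding c_def by simp
  have "a - u < (s0+1)*l" using f1(2) l by (simp add: divide_less_eq)
  hence c2: "c < u + l" unfolding c_def by (simp add: algebra_simps)
  have "Bset a b l \<inter> {u..u+l} \<subseteq> {c..min (c + (b-a)) (u+l)} \<union> {u..c + (b-a) - l}"
  proof
    fix x assume "x \<in> Bset a b l \<inter> {u..u+l}"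
    then obtain s :: int where x: "a < x + s*l" "x + s*l < b" "u \<le> x" "x \<le> u + l"
      unfolding Bset_def by auto
    define n where "n = s0 - s"
    have e1: "c + n*l < x" using x(1) unfolding c_def n_def by (simp add: algebra_simps)
    have e2: "x < c + n*l + (b-a)" using x(2) unfolding c_def n_def by (simp add: algebra_simps)
    have "real_of_int n * l < real_of_int 1 * l" using e1 c1 x(4) by simp
    hence "real_of_int n < real_of_int 1" by (rule iffD1[OF mult_less_cancel_right_pos[OF l]])
    hence n1: "n < 1" by (simp only: of_int_less_iff)
    have "real_of_int (-1) * l < real_of_int (n+1) * l" using e2 L c2 x(3) by (simp add: algebra_simps)
    hence "real_of_int (-1) < real_of_int (n+1)" by (rule iffD1[OF mult_less_cancel_right_pos[OF l]])
    hence "-1 < n+1" by (simp only: of_int_less_iff)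
    hence "n = 0 \<or> n = -1" using n1 by linarith
    thus "x \<in> {c..min (c + (b-a)) (u+l)} \<union> {u..c + (b-a) - l}"
    proof
      assume "n = 0"
      hence "c < x" "x < c + (b-a)" using e1 e2 by simp_all
      thus ?thesis using x(4) by simp
    next
      assume "n = -1"
      hence "x < c + (b-a) - l" using e2 by simp
      thus ?thesis using x(3) by simp
    qed
  qed
  thus ?thesis using that c1 c2 by blast
qed

lemma cell_bound:
  assumes l: "l > 0" and L: "b - a \<le> l"
  shows "emeasure lborel (Bset a b l \<inter> {u..u+l}) \<le> ennreal (max (b-a) 0)"
proof -
  obtain c where c: "u \<le> c" "c < u + l"
    "Bset a b l \<inter> {u..u+l} \<subseteq> {c..min (c + (b-a)) (u+l)} \<union> {u..c + (b-a) - l}"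
    using cell_sub[OF l L] by blast
  have "emeasure lborel (Bset a b l \<inter> {u..u+l}) \<le> emeasure lborel ({c..min (c + (b-a)) (u+l)} \<union> {u..c + (b-a) - l})"
    by (rule emeasure_mono[OF c(3)]) auto
  also have "\<dots> \<le> emeasure lborel {c..min (c + (b-a)) (u+l)} + emeasure lborel {u..c + (b-a) - l}"
    by (rule emeasure_subadditive) auto
  also have "\<dots> = ennreal (max (min (c + (b-a)) (u+l) - c) 0) + ennreal (max (c + (b-a) - l - u) 0)"
    unfolding emeasure_lborel_Icc_eq by (intro arg_cong2[where f="(+)"] arg_cong[where f=ennreal]) auto
  also have "\<dots> = ennreal (max (min (c + (b-a)) (u+l) - c) 0 + max (c + (b-a) - l - u) 0)"
    by (rule ennreal_plus[symmetric]) auto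
  also have "\<dots> \<le> ennreal (max (b-a) 0)"
    using c(1,2) by (intro ennreal_leI) (auto simp: max_def min_def)
  finally show ?thesis .
qed

lemma total_bound:
  assumes l: "l > 0" and L: "b - a \<le> l"
  shows "emeasure lborel (Bset a b l \<inter> {0..real N * l}) \<le> ennreal (real N * max (b-a) 0)"
proof (induction N)
  case 0
  have "emeasure lborel (Bset a b l \<inter> {0..real 0 * l}) \<le> emeasure lborel {0::real}"
    by (rule emeasure_mono) (auto simp del: of_nat_0)
  then show ?case by simp
next
  case (Suc N)
  have nn: "0 \<le> real N * l" "0 \<le> l * real N" using l by simp_all
  have "{0..real (Suc N) * l} = {0..real N * l} \<union> {real N * l..real N * l + l}"
    using l apply (auto simp: algebra_simps)
    using nn(2) by linarith
  hence "emeasure lborel (Bset a b l \<inter> {0..real (Suc N) * l}) =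
     emeasure lborel ((Bset a b l \<inter> {0..real N * l}) \<union> (Bset a b l \<inter> {real N * l..real N * l + l}))"
    by (simp add: Int_Un_distrib)
  also have "\<dots> \<le> emeasure lborel (Bset a b l \<inter> {0..real N * l}) + emeasure lborel (Bset a b l \<inter> {real N * l..real N * l + l})"
    by (intro emeasure_subadditive sets.Int Bset_sets) auto
  also have "\<dots> \<le> ennreal (real N * max (b-a) 0) + ennreal (max (b-a) 0)"
    by (intro add_mono Suc cell_bound l L)
  also have "\<dots> = ennreal (real N * max (b-a) 0 + max (b-a) 0)"
    by (rule ennreal_plus[symmetric]) auto
  also have "\<dots> = ennreal (real (Suc N) * max (b-a) 0)"
    by (simp add: algebra_simps)
  finally show ?case .
qed

lemma measure_Icc_eq: "measure lborel {p..q::real} = (if p \<le> q then q - p else 0)"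
  unfolding measure_def emeasure_lborel_Icc_eq by simp

lemma pos_meas_inter:
  assumes "measure lborel ({x..y} \<inter> {a..b::real}) > 0"
  shows "a < y \<and> x < b"
proof -
  have "measure lborel {max x a..min y b} > 0" using assms by (simp only: Int_atLeastAtMost)
  hence "max x a \<le> min y b \<and> min y b - max x a > 0" unfolding measure_Icc_eq by (simp split: if_splits)
  thus ?thesis by linarith
qed

lemma two_intervals:
  assumes I1: "I1 \<in> level_partition q T r0 m" and I2: "I2 \<in> level_partition q T r0 m"
    and ne: "I1 \<noteq> I2"
    and m1: "measure lborel (I1 \<inter> {a..b}) > 0" and m2: "measure lborel (I2 \<inter> {a..b}) > 0"
  shows "\<exists>g\<in>grid_points q T r0 m. a < g \<and> g < b"
proof -
  let ?G = "grid_points q T r0 m"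
  obtain x y where I1e: "I1 = {x..y}" "x \<in> ?G" "y \<in> ?G" "x < y" "{x<..<y} \<inter> ?G = {}"
    using I1 unfolding level_partition_def by blast
  obtain x' y' where I2e: "I2 = {x'..y'}" "x' \<in> ?G" "y' \<in> ?G" "x' < y'" "{x'<..<y'} \<inter> ?G = {}"
    using I2 unfolding level_partition_def by blast
  have p1: "a < y \<and> x < b" using pos_meas_inter m1 I1e(1) by blast
  have p2: "a < y' \<and> x' < b" using pos_meas_inter m2 I2e(1) by blast
  consider "x < x'" | "x = x'" | "x' < x" by linarith
  thus ?thesis
  proof cases
    case 1
    hence "y \<le> x'" using I1e(5) I2e(2) by (metis disjoint_iff greaterThanLessThan_iff not_le)
    thus ?thesis using p1 p2 I2e(2) by (intro bexI[of _ x']) auto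
  next
    case 2
    hence "y \<noteq> y'" using ne I1e(1) I2e(1) by auto
    hence "y < y' \<or> y' < y" by linarith
    thus ?thesis
    proof
      assume "y < y'"
      hence "y \<in> {x'<..<y'}" using I1e(4) 2 by simp
      hence False using I2e(5) I1e(3) by blast
      thus ?thesis ..
    next
      assume "y' < y"
      hence "y' \<in> {x<..<y}" using I2e(4) 2 by simp
      hence False using I1e(5) I2e(3) by blast
      thus ?thesis ..
    qed
  next
    case 3
    hence "y' \<le> x" using I2e(5) I1e(2) by (metis disjoint_iff greaterThanLessThan_iff not_le)
    thus ?thesis using p1 p2 I1e(2) by (intro bexI[of _ x]) auto
  qed
qed

lemma crossing_in_B:
  assumes rj: "0 \<le> rj" and dj: "dj \<le> int T"
    and sc: "span_crossing eps q T k r0 rj dj"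
  shows "\<exists>i\<in>{2..k+1}. in_class eps q T k i (real_of_int (dj - rj)) \<and>
           r0 \<in> Bset (real_of_int rj) (real_of_int dj) (ell q T (i-2))"
proof -
  obtain i I1 I2 where i: "i \<in> {2..k+1}" "in_class eps q T k i (real_of_int (dj - rj))"
    "I1 \<in> level_partition q T r0 (i - 2)" "I2 \<in> level_partition q T r0 (i - 2)" "I1 \<noteq> I2"
    "measure lborel (I1 \<inter> {real_of_int rj..real_of_int dj}) > 0"
    "measure lborel (I2 \<inter> {real_of_int rj..real_of_int dj}) > 0"
    using sc unfolding span_crossing_def by blast
  obtain g where g: "g \<in> grid_points q T r0 (i-2)" "real_of_int rj < g" "g < real_of_int dj"
    using two_intervals[OF i(3,4,5,6,7)] by blast
  have "0 < g" using g(2) rj by linarith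
  moreover have "g < real T" using g(3) dj by (metis of_int_le_iff of_int_of_nat_eq order_less_le_trans)
  ultimately obtain s :: int where "g = r0 + s * ell q T (i-2)"
    using g(1) unfolding grid_points_def by auto
  hence "r0 \<in> Bset (real_of_int rj) (real_of_int dj) (ell q T (i-2))"
    unfolding Bset_def using g by auto
  thus ?thesis using i by blast
qed

lemma ell_mono:
  assumes q: "q \<ge> 1" and ab: "a \<le> b"
  shows "ell q T b \<le> ell q T a"
proof -
  have "real q ^ (a+1) \<le> real q ^ (b+1)" using q ab by (intro power_increasing) auto
  moreover have "0 < real q ^ (a+1)" using q by simp
  ultimately show ?thesis unfolding ell_def by (intro divide_left_mono) auto
qed

lemma class_upper:
  assumes "i \<in> {2..k+1}" "in_class eps q T k i L"
  shows "L < (1/eps) * ell q T (i-1)"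
proof (cases "i \<le> k")
  case True thus ?thesis using assms unfolding in_class_def by auto
next
  case False hence "i = k+1" using assms(1) by auto
  thus ?thesis using assms(2) unfolding in_class_def by auto
qed

lemma class_lower:
  assumes "1 \<le> i" "i \<le> k" "in_class eps q T k i L"
  shows "(1/eps) * ell q T i \<le> L"
  using assms unfolding in_class_def by (auto split: if_splits)

lemma class_unique_lt:
  assumes eps: "eps > 0" and q: "q \<ge> 1"
    and i: "i \<in> {2..k+1}" and i': "i' \<in> {2..k+1}" and lt: "i < i'"
    and c: "in_class eps q T k i L" and c': "in_class eps q T k i' L"
  shows False
proof -
  have u: "L < (1/eps) * ell q T (i'-1)" by (rule class_upper[OF i' c'])
  have l: "(1/eps) * ell q T i \<le> L" using i lt i' by (intro class_lower[OF _ _ c]) auto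
  have "ell q T (i'-1) \<le> ell q T i" using lt by (intro ell_mono q) auto
  hence "(1/eps) * ell q T (i'-1) \<le> (1/eps) * ell q T i" using eps by (intro mult_left_mono) auto
  thus False using u l by linarith
qed

lemma class_unique:
  assumes eps: "eps > 0" and q: "q \<ge> 1"
    and i: "i \<in> {2..k+1}" and i': "i' \<in> {2..k+1}"
    and c: "in_class eps q T k i L" and c': "in_class eps q T k i' L"
  shows "i = i'"
proof (rule ccontr)
  assume "i \<noteq> i'"
  hence "i < i' \<or> i' < i" by linarith
  thus False using class_unique_lt[OF eps q i i' _ c c'] class_unique_lt[OF eps q i' i _ c' c] by blast
qed

lemma job_bound:
  assumes eps: "eps > 0" and q_def: "real q = 1 / eps ^ 2" and T: "T > 0"
    and i: "i \<in> {2..k+1}" and c: "in_class eps q T k i (b - a)"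
  shows "emeasure (uniform_measure lborel {0..real T / real q}) (Bset a b (ell q T (i-2)))
           \<le> ennreal ((1/eps+1)/real q)"
proof -
  define m where "m = i - 2"
  define l where "l = ell q T m"
  have qpos: "real q > 0" using q_def eps by simp
  hence q1: "q \<ge> 1" by simp
  have lpos: "l > 0" unfolding l_def ell_def using qpos T by simp
  have im: "i - 1 = m + 1" using i unfolding m_def by auto
  have ellS: "ell q T (i-1) = l / real q" unfolding im l_def ell_def by (simp add: field_simps)
  have epsq: "(1/eps) / real q = eps" unfolding q_def using eps by (simp add: field_simps power2_eq_square)
  have "eps ^ 2 = 1 / real q" unfolding q_def by simp
  also have "\<dots> \<le> 1" using q1 by simp
  finally have eps1: "eps \<le> 1" using eps by (metis less_eq_real_def not_le one_less_power zero_less_numeral)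
  have "b - a < (1/eps) * ell q T (i-1)" by (rule class_upper[OF i c])
  also have "\<dots> = ((1/eps) / real q) * l" unfolding ellS by simp
  also have "\<dots> = eps * l" unfolding epsq ..
  finally have Lt: "b - a < eps * l" .
  have "eps * l \<le> 1 * l" using eps1 lpos by (intro mult_right_mono) auto
  hence Ll: "b - a \<le> l" using Lt by simp
  define N where "N = q ^ m"
  have Npos: "real N > 0" unfolding N_def using qpos by simp
  have TN: "real T / real q = real N * l" unfolding N_def l_def ell_def using qpos
    by (simp add: field_simps)
  have "emeasure (uniform_measure lborel {0..real T / real q}) (Bset a b l)
      = emeasure lborel ({0..real T / real q} \<inter> Bset a b l) / emeasure lborel {0..real T / real q}"
    by (rule emeasure_uniform_measure) (auto intro: borel_open Bset_open)
  also have "\<dots> = emeasure lborel (Bset a b l \<inter> {0..real N * l}) / ennreal (real N * l)"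
    unfolding TN using Npos lpos by (simp add: Int_commute)
  also have "\<dots> \<le> ennreal (real N * max (b-a) 0) / ennreal (real N * l)"
    by (intro divide_right_mono_ennreal total_bound lpos Ll)
  also have "\<dots> = ennreal (real N * max (b-a) 0 / (real N * l))"
    using Npos lpos by (intro divide_ennreal) auto
  also have "\<dots> = ennreal (max (b-a) 0 / l)" using Npos by simp
  also have "\<dots> \<le> ennreal ((1/eps+1)/real q)"
  proof (intro ennreal_leI)
    have "max (b-a) 0 / l \<le> eps"
    proof (cases "b - a \<le> 0")
      case True thus ?thesis using eps by simp
    next
      case False thus ?thesis using Lt lpos by (simp add: divide_le_eq)
    qed
    also have "eps = (1/eps)/real q" using epsq by simp
    also have "\<dots> \<le> (1/eps+1)/real q" using qpos
      by (intro divide_right_mono) auto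
    finally show "max (b-a) 0 / l \<le> (1/eps+1)/real q" .
  qed
  finally show ?thesis unfolding l_def m_def .
qed

theorem mainTheorem6:
  fixes eps :: real and q k T :: nat
    and r d p :: "'j \<Rightarrow> int" and J S :: "'j set"
  assumes eps_pos: "eps > 0"
    and q_def: "real q = 1 / eps ^ 2"
    and T_def: "T = q ^ k"
    and finJ: "finite J"
    and SJ: "S \<subseteq> J"
    and jobs: "\<forall>j\<in>J. 0 \<le> r j \<and> r j \<le> int T \<and> 0 \<le> d j \<and> d j \<le> int T \<and> 0 \<le> p j \<and> p j \<le> int T"
  shows "(\<integral>\<^sup>+ r0. ennreal (real (card {j \<in> S. span_crossing eps q T k r0 (r j) (d j)}))
            \<partial>(uniform_measure lborel {0..real T / real q}))
         \<le> ennreal ((1 / eps + 1) / real q * real (card S))"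
proof -
  have qpos: "real q > 0" using q_def eps_pos by simp
  hence q1: "q \<ge> 1" by simp
  have Tpos: "T > 0" unfolding T_def using q1 by simp
  have finS: "finite S" using finJ SJ by (rule finite_subset[rotated])
  define ex where "ex j \<longleftrightarrow> (\<exists>i\<in>{2..k+1}. in_class eps q T k i (real_of_int (d j - r j)))" for j
  define ij where "ij j = (SOME i. i \<in> {2..k+1} \<and> in_class eps q T k i (real_of_int (d j - r j)))" for j
  define B where "B j = (if ex j then Bset (real_of_int (r j)) (real_of_int (d j)) (ell q T (ij j - 2)) else {})" for j
  define M where "M = uniform_measure lborel {0..real T / real q}"
  have ijp: "ij j \<in> {2..k+1} \<and> in_class eps q T k (ij j) (real_of_int (d j - r j))" if "ex j" for j
    using that unfolding ex_def ij_def by (metis (mono_tags, lifting) someI_ex)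
  have Bsets: "B j \<in> sets M" for j
    unfolding B_def M_def by (auto intro: borel_open Bset_open)
  have subB: "r0 \<in> B j" if j: "j \<in> S" and sc: "span_crossing eps q T k r0 (r j) (d j)" for r0 j
  proof -
    have jJ: "j \<in> J" using j SJ by auto
    obtain i where i: "i \<in> {2..k+1}" "in_class eps q T k i (real_of_int (d j - r j))"
      "r0 \<in> Bset (real_of_int (r j)) (real_of_int (d j)) (ell q T (i-2))"
      using crossing_in_B[OF _ _ sc] jobs jJ by blast
    have e: "ex j" unfolding ex_def using i by blast
    have "ij j = i" using class_unique[OF eps_pos q1 _ i(1) _ i(2)] ijp[OF e] by blast
    thus ?thesis unfolding B_def using e i by simp
  qed
  have pt: "ennreal (real (card {j \<in> S. span_crossing eps q T k r0 (r j) (d j)}))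
            \<le> (\<Sum>j\<in>S. indicator (B j) r0)" for r0
  proof -
    have "card {j \<in> S. span_crossing eps q T k r0 (r j) (d j)} \<le> card {j \<in> S. r0 \<in> B j}"
      using finS subB by (intro card_mono) auto
    hence "real (card {j \<in> S. span_crossing eps q T k r0 (r j) (d j)}) \<le> real (card {j \<in> S. r0 \<in> B j})"
      by simp
    also have "\<dots> = (\<Sum>j\<in>S. indicator (B j) r0)"
      unfolding real_of_card sum.inter_filter[OF finS] by (simp add: indicator_def of_bool_def)
    finally have "ennreal (real (card {j \<in> S. span_crossing eps q T k r0 (r j) (d j)}))
        \<le> ennreal (\<Sum>j\<in>S. indicator (B j) r0)" by (rule ennreal_leI)
    also have "\<dots> = (\<Sum>j\<in>S. ennreal (indicator (B j) r0))"
      by (rule sum_ennreal[symmetric]) auto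
    also have "\<dots> = (\<Sum>j\<in>S. indicator (B j) r0)" by (simp only: ennreal_indicator)
    finally show ?thesis .
  qed
  have jb: "emeasure M (B j) \<le> ennreal ((1/eps+1)/real q)" if "j \<in> S" for j
  proof (cases "ex j")
    case True
    have c: "in_class eps q T k (ij j) (real_of_int (d j) - real_of_int (r j))"
      using ijp[OF True] by simp
    show ?thesis unfolding B_def M_def using True
      by (simp only: if_True) (rule job_bound[OF eps_pos q_def Tpos _ c], use ijp[OF True] in blast)
  next
    case False thus ?thesis unfolding B_def by simp
  qed
  have "(\<integral>\<^sup>+ r0. ennreal (real (card {j \<in> S. span_crossing eps q T k r0 (r j) (d j)})) \<partial>M)
        \<le> (\<integral>\<^sup>+ r0. (\<Sum>j\<in>S. indicator (B j) r0) \<partial>M)"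
    by (intro nn_integral_mono pt)
  also have "\<dots> = (\<Sum>j\<in>S. \<integral>\<^sup>+ r0. indicator (B j) r0 \<partial>M)"
    by (intro nn_integral_sum borel_measurable_indicator Bsets)
  also have "\<dots> = (\<Sum>j\<in>S. emeasure M (B j))"
    by (intro sum.cong refl nn_integral_indicator Bsets)
  also have "\<dots> \<le> (\<Sum>j\<in>S. ennreal ((1/eps+1)/real q))"
    by (intro sum_mono jb)
  also have "\<dots> = ennreal (\<Sum>j\<in>S. (1/eps+1)/real q)"
    by (rule sum_ennreal) (use eps_pos qpos in simp)
  also have "\<dots> = ennreal ((1 / eps + 1) / real q * real (card S))"
    by (simp add: mult.commute)
  finally show ?thesis unfolding M_def .
qed

end
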